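(* Any homomorphism between special 2-groups is isomorphic, in the 2-category $\mathrm{C2G}$, to a special homomorphism.
   Context: A coherent 2-group is a weak monoidal category in which all morphisms are invertible and each object $x$ is equipped with an adjoint equivalence $(x,\bar x,i_x,e_x)$ ($i_x\colon 1\to x\otimes\bar x$, $e_x\colon\bar x\otimes x\to 1$ isomorphisms satisfying the zig-zag identities). A special 2-group is a coherent 2-group whose underlying category is skeletal (isomorphic objects are equal) and whose left unitor, right unitor, units $i$ and counits $e$ are identity natural transformations. A homomorphism of coherent 2-groups is a weak monoidal functor $F$ (structure maps $F_2\colon F(x)\otimes F(y)\to F(x\otimes y)$, $F_0\colon 1'\to F(1)$); it is special if it goes between special 2-groups and $F_0$ is an identity morphism. $\mathrm{C2G}$ is the strict 2-category of coherent 2-groups, weak monoidal functors and monoidal natural transformations; "isomorphic" means related by an invertible monoidal natural transformation. *)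

theory Defs
  imports Main
begin

text \<open>Composition convention: mcomp C g f is g after f (defined when mdom g = mcod f).
  tens is the tensor on objects, tensm on morphisms; assoc x y z : (x*y)*z -> x*(y*z);
  lunit x : 1*x -> x; runit x : x*1 -> x.\<close>

record ('o, 'm) mcat =
  obj :: "'o set"
  arr :: "'m set"
  mdom :: "'m \<Rightarrow> 'o"
  mcod :: "'m \<Rightarrow> 'o"
  mcomp :: "'m \<Rightarrow> 'm \<Rightarrow> 'm"
  mid :: "'o \<Rightarrow> 'm"
  tens :: "'o \<Rightarrow> 'o \<Rightarrow> 'o"
  tensm :: "'m \<Rightarrow> 'm \<Rightarrow> 'm"
  unit_ob :: "'o"
  assoc :: "'o \<Rightarrow> 'o \<Rightarrow> 'o \<Rightarrow> 'm"
  lunit :: "'o \<Rightarrow> 'm"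
  runit :: "'o \<Rightarrow> 'm"

text \<open>Coherent 2-group data: dual object, unit i_x : 1 -> x*xbar, counit e_x : xbar*x -> 1.\<close>
record ('o, 'm) c2g = "('o, 'm) mcat" +
  dual :: "'o \<Rightarrow> 'o"
  coev :: "'o \<Rightarrow> 'm"
  ev :: "'o \<Rightarrow> 'm"

definition category :: "('o, 'm, 'z) mcat_scheme \<Rightarrow> bool" where
  "category C \<equiv>
    (\<forall>f\<in>arr C. mdom C f \<in> obj C \<and> mcod C f \<in> obj C) \<and>
    (\<forall>x\<in>obj C. mid C x \<in> arr C \<and> mdom C (mid C x) = x \<and> mcod C (mid C x) = x) \<and>
    (\<forall>f\<in>arr C. \<forall>g\<in>arr C. mdom C g = mcod C f \<longrightarrow>
        mcomp C g f \<in> arr C \<and> mdom C (mcomp C g f) = mdom C f \<and> mcod C (mcomp C g f) = mcod C g) \<and>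
    (\<forall>f\<in>arr C. mcomp C f (mid C (mdom C f)) = f \<and> mcomp C (mid C (mcod C f)) f = f) \<and>
    (\<forall>f\<in>arr C. \<forall>g\<in>arr C. \<forall>h\<in>arr C. mdom C g = mcod C f \<longrightarrow> mdom C h = mcod C g \<longrightarrow>
        mcomp C h (mcomp C g f) = mcomp C (mcomp C h g) f)"

definition is_inverse :: "('o, 'm, 'z) mcat_scheme \<Rightarrow> 'm \<Rightarrow> 'm \<Rightarrow> bool" where
  "is_inverse C f g \<equiv> f \<in> arr C \<and> g \<in> arr C \<and> mdom C g = mcod C f \<and> mcod C g = mdom C f \<and>
     mcomp C g f = mid C (mdom C f) \<and> mcomp C f g = mid C (mcod C f)"

definition iso :: "('o, 'm, 'z) mcat_scheme \<Rightarrow> 'm \<Rightarrow> bool" where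
  "iso C f \<equiv> \<exists>g. is_inverse C f g"

definition inv_arr :: "('o, 'm, 'z) mcat_scheme \<Rightarrow> 'm \<Rightarrow> 'm" where
  "inv_arr C f = (SOME g. is_inverse C f g)"

definition monoidal_category :: "('o, 'm, 'z) mcat_scheme \<Rightarrow> bool" where
  "monoidal_category C \<equiv>
    category C \<and>
    unit_ob C \<in> obj C \<and>
    (\<forall>x\<in>obj C. \<forall>y\<in>obj C. tens C x y \<in> obj C) \<and>
    (\<forall>f\<in>arr C. \<forall>g\<in>arr C. tensm C f g \<in> arr C \<and>
        mdom C (tensm C f g) = tens C (mdom C f) (mdom C g) \<and>
        mcod C (tensm C f g) = tens C (mcod C f) (mcod C g)) \<and>
    (\<forall>x\<in>obj C. \<forall>y\<in>obj C. tensm C (mid C x) (mid C y) = mid C (tens C x y)) \<and>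
    (\<forall>f\<in>arr C. \<forall>f'\<in>arr C. \<forall>g\<in>arr C. \<forall>g'\<in>arr C.
        mdom C f' = mcod C f \<longrightarrow> mdom C g' = mcod C g \<longrightarrow>
        tensm C (mcomp C f' f) (mcomp C g' g) = mcomp C (tensm C f' g') (tensm C f g)) \<and>
    (\<forall>x\<in>obj C. \<forall>y\<in>obj C. \<forall>z\<in>obj C. assoc C x y z \<in> arr C \<and> iso C (assoc C x y z) \<and>
        mdom C (assoc C x y z) = tens C (tens C x y) z \<and>
        mcod C (assoc C x y z) = tens C x (tens C y z)) \<and>
    (\<forall>f\<in>arr C. \<forall>g\<in>arr C. \<forall>h\<in>arr C.
        mcomp C (assoc C (mcod C f) (mcod C g) (mcod C h)) (tensm C (tensm C f g) h) =
        mcomp C (tensm C f (tensm C g h)) (assoc C (mdom C f) (mdom C g) (mdom C h))) \<and>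
    (\<forall>x\<in>obj C. lunit C x \<in> arr C \<and> iso C (lunit C x) \<and>
        mdom C (lunit C x) = tens C (unit_ob C) x \<and> mcod C (lunit C x) = x) \<and>
    (\<forall>f\<in>arr C. mcomp C (lunit C (mcod C f)) (tensm C (mid C (unit_ob C)) f) =
        mcomp C f (lunit C (mdom C f))) \<and>
    (\<forall>x\<in>obj C. runit C x \<in> arr C \<and> iso C (runit C x) \<and>
        mdom C (runit C x) = tens C x (unit_ob C) \<and> mcod C (runit C x) = x) \<and>
    (\<forall>f\<in>arr C. mcomp C (runit C (mcod C f)) (tensm C f (mid C (unit_ob C))) =
        mcomp C f (runit C (mdom C f))) \<and>
    \<comment> \<open>pentagon\<close>
    (\<forall>w\<in>obj C. \<forall>x\<in>obj C. \<forall>y\<in>obj C. \<forall>z\<in>obj C.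
        mcomp C (tensm C (mid C w) (assoc C x y z))
          (mcomp C (assoc C w (tens C x y) z) (tensm C (assoc C w x y) (mid C z))) =
        mcomp C (assoc C w x (tens C y z)) (assoc C (tens C w x) y z)) \<and>
    \<comment> \<open>triangle\<close>
    (\<forall>x\<in>obj C. \<forall>y\<in>obj C.
        mcomp C (tensm C (mid C x) (lunit C y)) (assoc C x (unit_ob C) y) =
        tensm C (runit C x) (mid C y))"

definition coherent_2group :: "('o, 'm, 'z) c2g_scheme \<Rightarrow> bool" where
  "coherent_2group C \<equiv>
    monoidal_category C \<and>
    (\<forall>f\<in>arr C. iso C f) \<and>
    (\<forall>x\<in>obj C.
       dual C x \<in> obj C \<and>
       coev C x \<in> arr C \<and> iso C (coev C x) \<and>
       mdom C (coev C x) = unit_ob C \<and> mcod C (coev C x) = tens C x (dual C x) \<and>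
       ev C x \<in> arr C \<and> iso C (ev C x) \<and>
       mdom C (ev C x) = tens C (dual C x) x \<and> mcod C (ev C x) = unit_ob C \<and>
       \<comment> \<open>zig-zag identities\<close>
       mcomp C (runit C x)
         (mcomp C (tensm C (mid C x) (ev C x))
           (mcomp C (assoc C x (dual C x) x)
             (mcomp C (tensm C (coev C x) (mid C x)) (inv_arr C (lunit C x))))) = mid C x \<and>
       mcomp C (lunit C (dual C x))
         (mcomp C (tensm C (ev C x) (mid C (dual C x)))
           (mcomp C (inv_arr C (assoc C (dual C x) x (dual C x)))
             (mcomp C (tensm C (mid C (dual C x)) (coev C x)) (inv_arr C (runit C (dual C x)))))) =
         mid C (dual C x))"

definition skeletal :: "('o, 'm, 'z) mcat_scheme \<Rightarrow> bool" where
  "skeletal C \<equiv> \<forall>x\<in>obj C. \<forall>y\<in>obj C.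
     (\<exists>f\<in>arr C. iso C f \<and> mdom C f = x \<and> mcod C f = y) \<longrightarrow> x = y"

definition special_2group :: "('o, 'm, 'z) c2g_scheme \<Rightarrow> bool" where
  "special_2group C \<equiv> coherent_2group C \<and> skeletal C \<and>
    (\<forall>x\<in>obj C. lunit C x = mid C x \<and> runit C x = mid C x \<and>
        coev C x = mid C (unit_ob C) \<and> ev C x = mid C (unit_ob C))"

text \<open>f2 x y : F x * F y -> F (x*y);  f0 : 1' -> F 1.\<close>
record ('o1, 'm1, 'o2, 'm2) mfun =
  fob :: "'o1 \<Rightarrow> 'o2"
  farr :: "'m1 \<Rightarrow> 'm2"
  f2 :: "'o1 \<Rightarrow> 'o1 \<Rightarrow> 'm2"
  f0 :: "'m2"

definition is_functor :: "('o1, 'm1, 'z1) mcat_scheme \<Rightarrow> ('o2, 'm2, 'z2) mcat_scheme \<Rightarrow>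
    ('o1, 'm1, 'o2, 'm2, 'z3) mfun_scheme \<Rightarrow> bool" where
  "is_functor C D F \<equiv>
    (\<forall>x\<in>obj C. fob F x \<in> obj D) \<and>
    (\<forall>f\<in>arr C. farr F f \<in> arr D \<and> mdom D (farr F f) = fob F (mdom C f) \<and>
        mcod D (farr F f) = fob F (mcod C f)) \<and>
    (\<forall>x\<in>obj C. farr F (mid C x) = mid D (fob F x)) \<and>
    (\<forall>f\<in>arr C. \<forall>g\<in>arr C. mdom C g = mcod C f \<longrightarrow>
        farr F (mcomp C g f) = mcomp D (farr F g) (farr F f))"

definition weak_monoidal_functor :: "('o1, 'm1, 'z1) mcat_scheme \<Rightarrow> ('o2, 'm2, 'z2) mcat_scheme \<Rightarrow>
    ('o1, 'm1, 'o2, 'm2, 'z3) mfun_scheme \<Rightarrow> bool" where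
  "weak_monoidal_functor C D F \<equiv>
    is_functor C D F \<and>
    (\<forall>x\<in>obj C. \<forall>y\<in>obj C. f2 F x y \<in> arr D \<and> iso D (f2 F x y) \<and>
        mdom D (f2 F x y) = tens D (fob F x) (fob F y) \<and>
        mcod D (f2 F x y) = fob F (tens C x y)) \<and>
    (\<forall>f\<in>arr C. \<forall>g\<in>arr C.
        mcomp D (farr F (tensm C f g)) (f2 F (mdom C f) (mdom C g)) =
        mcomp D (f2 F (mcod C f) (mcod C g)) (tensm D (farr F f) (farr F g))) \<and>
    f0 F \<in> arr D \<and> iso D (f0 F) \<and>
    mdom D (f0 F) = unit_ob D \<and> mcod D (f0 F) = fob F (unit_ob C) \<and>
    (\<forall>x\<in>obj C. \<forall>y\<in>obj C. \<forall>z\<in>obj C.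
        mcomp D (farr F (assoc C x y z))
          (mcomp D (f2 F (tens C x y) z) (tensm D (f2 F x y) (mid D (fob F z)))) =
        mcomp D (f2 F x (tens C y z))
          (mcomp D (tensm D (mid D (fob F x)) (f2 F y z))
             (assoc D (fob F x) (fob F y) (fob F z)))) \<and>
    (\<forall>x\<in>obj C.
        mcomp D (farr F (lunit C x))
          (mcomp D (f2 F (unit_ob C) x) (tensm D (f0 F) (mid D (fob F x)))) =
        lunit D (fob F x)) \<and>
    (\<forall>x\<in>obj C.
        mcomp D (farr F (runit C x))
          (mcomp D (f2 F x (unit_ob C)) (tensm D (mid D (fob F x)) (f0 F))) =
        runit D (fob F x))"

definition c2g_hom :: "('o1, 'm1, 'z1) c2g_scheme \<Rightarrow> ('o2, 'm2, 'z2) c2g_scheme \<Rightarrow>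
    ('o1, 'm1, 'o2, 'm2, 'z3) mfun_scheme \<Rightarrow> bool" where
  "c2g_hom C D F \<equiv> coherent_2group C \<and> coherent_2group D \<and> weak_monoidal_functor C D F"

definition special_hom :: "('o1, 'm1, 'z1) c2g_scheme \<Rightarrow> ('o2, 'm2, 'z2) c2g_scheme \<Rightarrow>
    ('o1, 'm1, 'o2, 'm2, 'z3) mfun_scheme \<Rightarrow> bool" where
  "special_hom C D F \<equiv> special_2group C \<and> special_2group D \<and> c2g_hom C D F \<and>
     f0 F = mid D (unit_ob D)"

definition monoidal_nat_trans :: "('o1, 'm1, 'z1) mcat_scheme \<Rightarrow> ('o2, 'm2, 'z2) mcat_scheme \<Rightarrow>
    ('o1, 'm1, 'o2, 'm2, 'z3) mfun_scheme \<Rightarrow> ('o1, 'm1, 'o2, 'm2, 'z4) mfun_scheme \<Rightarrow>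
    ('o1 \<Rightarrow> 'm2) \<Rightarrow> bool" where
  "monoidal_nat_trans C D F G \<theta> \<equiv>
    (\<forall>x\<in>obj C. \<theta> x \<in> arr D \<and> mdom D (\<theta> x) = fob F x \<and> mcod D (\<theta> x) = fob G x) \<and>
    (\<forall>f\<in>arr C. mcomp D (farr G f) (\<theta> (mdom C f)) = mcomp D (\<theta> (mcod C f)) (farr F f)) \<and>
    (\<forall>x\<in>obj C. \<forall>y\<in>obj C.
        mcomp D (\<theta> (tens C x y)) (f2 F x y) = mcomp D (f2 G x y) (tensm D (\<theta> x) (\<theta> y))) \<and>
    mcomp D (\<theta> (unit_ob C)) (f0 F) = f0 G"

definition monoidal_nat_iso :: "('o1, 'm1, 'z1) mcat_scheme \<Rightarrow> ('o2, 'm2, 'z2) mcat_scheme \<Rightarrow>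
    ('o1, 'm1, 'o2, 'm2, 'z3) mfun_scheme \<Rightarrow> ('o1, 'm1, 'o2, 'm2, 'z4) mfun_scheme \<Rightarrow>
    ('o1 \<Rightarrow> 'm2) \<Rightarrow> bool" where
  "monoidal_nat_iso C D F G \<theta> \<equiv> monoidal_nat_trans C D F G \<theta> \<and> (\<forall>x\<in>obj C. iso D (\<theta> x))"

definition isomorphic_homs :: "('o1, 'm1, 'z1) mcat_scheme \<Rightarrow> ('o2, 'm2, 'z2) mcat_scheme \<Rightarrow>
    ('o1, 'm1, 'o2, 'm2, 'z3) mfun_scheme \<Rightarrow> ('o1, 'm1, 'o2, 'm2, 'z4) mfun_scheme \<Rightarrow> bool" where
  "isomorphic_homs C D F G \<equiv> \<exists>\<theta>. monoidal_nat_iso C D F G \<theta>"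

end

theory Submission
  imports Defs
begin

locale MC =
  fixes D :: "('p, 'n, 'z) mcat_scheme"
  assumes mc: "monoidal_category D"
begin

abbreviation cmp (infixr "\<cdot>" 55) where "g \<cdot> f \<equiv> mcomp D g f"
abbreviation tsm (infixr "\<star>" 60) where "f \<star> g \<equiv> tensm D f g"

lemma cat: "category D" using mc[unfolded monoidal_category_def, THEN conjunct1] by blast

lemma dom_obj[simp]: "f \<in> arr D \<Longrightarrow> mdom D f \<in> obj D"
  using cat unfolding category_def by blast
lemma cod_obj[simp]: "f \<in> arr D \<Longrightarrow> mcod D f \<in> obj D"
  using cat unfolding category_def by blast
lemma id_arr[simp]: "x \<in> obj D \<Longrightarrow> mid D x \<in> arr D"
  using cat unfolding category_def by blast
lemma dom_id[simp]: "x \<in> obj D \<Longrightarrow> mdom D (mid D x) = x"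
  using cat unfolding category_def by blast
lemma cod_id[simp]: "x \<in> obj D \<Longrightarrow> mcod D (mid D x) = x"
  using cat unfolding category_def by blast
lemma comp_arr[simp]: "f \<in> arr D \<Longrightarrow> g \<in> arr D \<Longrightarrow> mdom D g = mcod D f \<Longrightarrow> g \<cdot> f \<in> arr D"
  using cat unfolding category_def by blast
lemma dom_comp[simp]: "f \<in> arr D \<Longrightarrow> g \<in> arr D \<Longrightarrow> mdom D g = mcod D f \<Longrightarrow> mdom D (g \<cdot> f) = mdom D f"
  using cat unfolding category_def by blast
lemma cod_comp[simp]: "f \<in> arr D \<Longrightarrow> g \<in> arr D \<Longrightarrow> mdom D g = mcod D f \<Longrightarrow> mcod D (g \<cdot> f) = mcod D g"
  using cat unfolding category_def by blast
lemma comp_id_r[simp]: "f \<in> arr D \<Longrightarrow> mdom D f = x \<Longrightarrow> f \<cdot> mid D x = f"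
  using cat unfolding category_def by blast
lemma comp_id_l[simp]: "f \<in> arr D \<Longrightarrow> mcod D f = x \<Longrightarrow> mid D x \<cdot> f = f"
  using cat unfolding category_def by blast
lemma comp_assoc: "f \<in> arr D \<Longrightarrow> g \<in> arr D \<Longrightarrow> h \<in> arr D \<Longrightarrow> mdom D g = mcod D f \<Longrightarrow>
   mdom D h = mcod D g \<Longrightarrow> (h \<cdot> g) \<cdot> f = h \<cdot> (g \<cdot> f)"
  using cat unfolding category_def by metis

lemma unit_obj[simp]: "unit_ob D \<in> obj D" using mc[unfolded monoidal_category_def, THEN conjunct2, THEN conjunct1] by blast
lemma tens_obj[simp]: "x \<in> obj D \<Longrightarrow> y \<in> obj D \<Longrightarrow> tens D x y \<in> obj D"
  using mc[unfolded monoidal_category_def, THEN conjunct2, THEN conjunct2, THEN conjunct1] by blast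
lemma tensm_arr[simp]: "f \<in> arr D \<Longrightarrow> g \<in> arr D \<Longrightarrow> f \<star> g \<in> arr D"
  using mc[unfolded monoidal_category_def, THEN conjunct2, THEN conjunct2, THEN conjunct2, THEN conjunct1] by blast
lemma dom_tensm[simp]: "f \<in> arr D \<Longrightarrow> g \<in> arr D \<Longrightarrow> mdom D (f \<star> g) = tens D (mdom D f) (mdom D g)"
  using mc[unfolded monoidal_category_def, THEN conjunct2, THEN conjunct2, THEN conjunct2, THEN conjunct1] by blast
lemma cod_tensm[simp]: "f \<in> arr D \<Longrightarrow> g \<in> arr D \<Longrightarrow> mcod D (f \<star> g) = tens D (mcod D f) (mcod D g)"
  using mc[unfolded monoidal_category_def, THEN conjunct2, THEN conjunct2, THEN conjunct2, THEN conjunct1] by blast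
lemma tensm_id[simp]: "x \<in> obj D \<Longrightarrow> y \<in> obj D \<Longrightarrow> mid D x \<star> mid D y = mid D (tens D x y)"
  using mc[unfolded monoidal_category_def, THEN conjunct2, THEN conjunct2, THEN conjunct2, THEN conjunct2, THEN conjunct1] by blast
lemma interchange: "f \<in> arr D \<Longrightarrow> f' \<in> arr D \<Longrightarrow> g \<in> arr D \<Longrightarrow> g' \<in> arr D \<Longrightarrow>
   mdom D f' = mcod D f \<Longrightarrow> mdom D g' = mcod D g \<Longrightarrow> (f' \<cdot> f) \<star> (g' \<cdot> g) = (f' \<star> g') \<cdot> (f \<star> g)"
  using mc[unfolded monoidal_category_def, THEN conjunct2, THEN conjunct2, THEN conjunct2, THEN conjunct2, THEN conjunct2, THEN conjunct1] by blast
lemma assoc_arr[simp]: "x \<in> obj D \<Longrightarrow> y \<in> obj D \<Longrightarrow> z \<in> obj D \<Longrightarrow> assoc D x y z \<in> arr D"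
  using mc[unfolded monoidal_category_def, THEN conjunct2, THEN conjunct2, THEN conjunct2, THEN conjunct2, THEN conjunct2, THEN conjunct2, THEN conjunct1] by blast
lemma dom_assoc[simp]: "x \<in> obj D \<Longrightarrow> y \<in> obj D \<Longrightarrow> z \<in> obj D \<Longrightarrow> mdom D (assoc D x y z) = tens D (tens D x y) z"
  using mc[unfolded monoidal_category_def, THEN conjunct2, THEN conjunct2, THEN conjunct2, THEN conjunct2, THEN conjunct2, THEN conjunct2, THEN conjunct1] by blast
lemma cod_assoc[simp]: "x \<in> obj D \<Longrightarrow> y \<in> obj D \<Longrightarrow> z \<in> obj D \<Longrightarrow> mcod D (assoc D x y z) = tens D x (tens D y z)"
  using mc[unfolded monoidal_category_def, THEN conjunct2, THEN conjunct2, THEN conjunct2, THEN conjunct2, THEN conjunct2, THEN conjunct2, THEN conjunct1] by blast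
lemma assoc_nat: "f \<in> arr D \<Longrightarrow> g \<in> arr D \<Longrightarrow> h \<in> arr D \<Longrightarrow>
   assoc D (mcod D f) (mcod D g) (mcod D h) \<cdot> ((f \<star> g) \<star> h) = (f \<star> (g \<star> h)) \<cdot> assoc D (mdom D f) (mdom D g) (mdom D h)"
  using mc[unfolded monoidal_category_def, THEN conjunct2, THEN conjunct2, THEN conjunct2, THEN conjunct2, THEN conjunct2, THEN conjunct2, THEN conjunct2, THEN conjunct1] by blast
lemma lunit_prop: "x \<in> obj D \<Longrightarrow> lunit D x \<in> arr D \<and> mdom D (lunit D x) = tens D (unit_ob D) x \<and> mcod D (lunit D x) = x"
  using mc[unfolded monoidal_category_def, THEN conjunct2, THEN conjunct2, THEN conjunct2, THEN conjunct2, THEN conjunct2, THEN conjunct2, THEN conjunct2, THEN conjunct2, THEN conjunct1] by blast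
lemma runit_prop: "x \<in> obj D \<Longrightarrow> runit D x \<in> arr D \<and> mdom D (runit D x) = tens D x (unit_ob D) \<and> mcod D (runit D x) = x"
  using mc[unfolded monoidal_category_def, THEN conjunct2, THEN conjunct2, THEN conjunct2, THEN conjunct2, THEN conjunct2, THEN conjunct2, THEN conjunct2, THEN conjunct2, THEN conjunct2, THEN conjunct2, THEN conjunct1] by blast
lemma lunit_nat: "f \<in> arr D \<Longrightarrow> lunit D (mcod D f) \<cdot> (mid D (unit_ob D) \<star> f) = f \<cdot> lunit D (mdom D f)"
  using mc[unfolded monoidal_category_def, THEN conjunct2, THEN conjunct2, THEN conjunct2, THEN conjunct2, THEN conjunct2, THEN conjunct2, THEN conjunct2, THEN conjunct2, THEN conjunct2, THEN conjunct1] by blast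
lemma runit_nat: "f \<in> arr D \<Longrightarrow> runit D (mcod D f) \<cdot> (f \<star> mid D (unit_ob D)) = f \<cdot> runit D (mdom D f)"
  using mc[unfolded monoidal_category_def, THEN conjunct2, THEN conjunct2, THEN conjunct2, THEN conjunct2, THEN conjunct2, THEN conjunct2, THEN conjunct2, THEN conjunct2, THEN conjunct2, THEN conjunct2, THEN conjunct2, THEN conjunct1] by blast

lemma cancel_r:
  assumes "f \<in> arr D" "iso D f" "e1 \<in> arr D" "e2 \<in> arr D" "mdom D e1 = mcod D f" "mdom D e2 = mcod D f"
    "e1 \<cdot> f = e2 \<cdot> f"
  shows "e1 = e2"
proof -
  obtain g where g: "is_inverse D f g" using assms(2) unfolding iso_def by blast
  hence gg: "g \<in> arr D" "mdom D g = mcod D f" "mcod D g = mdom D f" "f \<cdot> g = mid D (mcod D f)"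
    unfolding is_inverse_def by auto
  have "e1 = e1 \<cdot> (f \<cdot> g)" using gg assms by simp
  also have "\<dots> = (e1 \<cdot> f) \<cdot> g" by (rule comp_assoc[symmetric]) (use gg assms in auto)
  also have "\<dots> = (e2 \<cdot> f) \<cdot> g" using assms by simp
  also have "\<dots> = e2 \<cdot> (f \<cdot> g)" by (rule comp_assoc) (use gg assms in auto)
  also have "\<dots> = e2" using gg assms by simp
  finally show ?thesis .
qed

end

locale SMC = MC +
  assumes lu: "\<forall>x\<in>obj D. lunit D x = mid D x"
      and ru: "\<forall>x\<in>obj D. runit D x = mid D x"
begin

lemma tens_unit_l[simp]: "x \<in> obj D \<Longrightarrow> tens D (unit_ob D) x = x"
  using lunit_prop[of x] lu by force
lemma tens_unit_r[simp]: "x \<in> obj D \<Longrightarrow> tens D x (unit_ob D) = x"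
  using runit_prop[of x] ru by force
lemma unit_tensm[simp]: "f \<in> arr D \<Longrightarrow> mid D (unit_ob D) \<star> f = f"
  using lunit_nat[of f] lu by simp
lemma tensm_unit[simp]: "f \<in> arr D \<Longrightarrow> f \<star> mid D (unit_ob D) = f"
  using runit_nat[of f] ru by simp

end


locale SETUP = SMC D for D :: "('p, 'n) c2g" +
  fixes C :: "('o, 'm) c2g" and F :: "('o, 'm, 'p, 'n) mfun" and a :: 'n
  assumes sC: "special_2group C" and sD: "special_2group D" and hom: "c2g_hom C D F"
    and ainv: "is_inverse D (f0 F) a"
begin

lemma mcC: "monoidal_category C" using sC unfolding special_2group_def coherent_2group_def by blast
lemma luC: "x \<in> obj C \<Longrightarrow> lunit C x = mid C x" using sC unfolding special_2group_def by blast
lemma ruC: "x \<in> obj C \<Longrightarrow> runit C x = mid C x" using sC unfolding special_2group_def by blast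
lemma smcC: "SMC C" unfolding SMC_def SMC_axioms_def MC_def using mcC luC ruC by blast

lemmas C_tens_obj[simp] = MC.tens_obj[OF MC.intro, OF mcC]
lemmas C_unit_obj[simp] = MC.unit_obj[OF MC.intro, OF mcC]
lemmas C_id_arr[simp] = MC.id_arr[OF MC.intro, OF mcC]
lemmas C_dom_id[simp] = MC.dom_id[OF MC.intro, OF mcC]
lemmas C_cod_id[simp] = MC.cod_id[OF MC.intro, OF mcC]
lemmas C_assoc_arr[simp] = MC.assoc_arr[OF MC.intro, OF mcC]
lemmas C_dom_assoc[simp] = MC.dom_assoc[OF MC.intro, OF mcC]
lemmas C_cod_assoc[simp] = MC.cod_assoc[OF MC.intro, OF mcC]
lemmas C_dom_obj[simp] = MC.dom_obj[OF MC.intro, OF mcC]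
lemmas C_cod_obj[simp] = MC.cod_obj[OF MC.intro, OF mcC]
lemmas C_tensm_arr[simp] = MC.tensm_arr[OF MC.intro, OF mcC]
lemmas C_dom_tensm[simp] = MC.dom_tensm[OF MC.intro, OF mcC]
lemmas C_cod_tensm[simp] = MC.cod_tensm[OF MC.intro, OF mcC]
lemmas C_tens_unit_l[simp] = SMC.tens_unit_l[OF smcC]
lemmas C_tens_unit_r[simp] = SMC.tens_unit_r[OF smcC]

lemma alliso: "f \<in> arr D \<Longrightarrow> iso D f"
  using sD unfolding special_2group_def coherent_2group_def by blast

lemma wmf: "weak_monoidal_functor C D F" using hom unfolding c2g_hom_def by blast
lemma isF: "is_functor C D F" using wmf unfolding weak_monoidal_functor_def by blast

lemma F_obj[simp]: "x \<in> obj C \<Longrightarrow> fob F x \<in> obj D" using isF unfolding is_functor_def by blast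
lemma F_arr[simp]: "f \<in> arr C \<Longrightarrow> farr F f \<in> arr D" using isF unfolding is_functor_def by blast
lemma F_dom[simp]: "f \<in> arr C \<Longrightarrow> mdom D (farr F f) = fob F (mdom C f)" using isF unfolding is_functor_def by blast
lemma F_cod[simp]: "f \<in> arr C \<Longrightarrow> mcod D (farr F f) = fob F (mcod C f)" using isF unfolding is_functor_def by blast
lemma F_id[simp]: "x \<in> obj C \<Longrightarrow> farr F (mid C x) = mid D (fob F x)" using isF unfolding is_functor_def by blast
lemma F2_arr[simp]: "x \<in> obj C \<Longrightarrow> y \<in> obj C \<Longrightarrow> f2 F x y \<in> arr D"
  using wmf unfolding weak_monoidal_functor_def by blast
lemma F2_dom[simp]: "x \<in> obj C \<Longrightarrow> y \<in> obj C \<Longrightarrow> mdom D (f2 F x y) = tens D (fob F x) (fob F y)"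
  using wmf unfolding weak_monoidal_functor_def by blast
lemma F2_cod[simp]: "x \<in> obj C \<Longrightarrow> y \<in> obj C \<Longrightarrow> mcod D (f2 F x y) = fob F (tens C x y)"
  using wmf unfolding weak_monoidal_functor_def by blast
lemma F2_nat: "f \<in> arr C \<Longrightarrow> g \<in> arr C \<Longrightarrow>
   farr F (tensm C f g) \<cdot> f2 F (mdom C f) (mdom C g) = f2 F (mcod C f) (mcod C g) \<cdot> (farr F f \<star> farr F g)"
  using wmf unfolding weak_monoidal_functor_def by blast
lemma f0_arr[simp]: "f0 F \<in> arr D" using wmf unfolding weak_monoidal_functor_def by blast
lemma f0_dom0: "mdom D (f0 F) = unit_ob D" using wmf unfolding weak_monoidal_functor_def by blast
lemma f0_cod0: "mcod D (f0 F) = fob F (unit_ob C)" using wmf unfolding weak_monoidal_functor_def by blast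
lemma F_assoc: "x \<in> obj C \<Longrightarrow> y \<in> obj C \<Longrightarrow> z \<in> obj C \<Longrightarrow>
        farr F (assoc C x y z) \<cdot> (f2 F (tens C x y) z \<cdot> (f2 F x y \<star> mid D (fob F z))) =
        f2 F x (tens C y z) \<cdot> ((mid D (fob F x) \<star> f2 F y z) \<cdot> assoc D (fob F x) (fob F y) (fob F z))"
  using wmf unfolding weak_monoidal_functor_def by blast
lemma F_lunit: "x \<in> obj C \<Longrightarrow>
        farr F (lunit C x) \<cdot> (f2 F (unit_ob C) x \<cdot> (f0 F \<star> mid D (fob F x))) = lunit D (fob F x)"
  using wmf unfolding weak_monoidal_functor_def by blast
lemma F_runit: "x \<in> obj C \<Longrightarrow>
        farr F (runit C x) \<cdot> (f2 F x (unit_ob C) \<cdot> (mid D (fob F x) \<star> f0 F)) = runit D (fob F x)"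
  using wmf unfolding weak_monoidal_functor_def by blast

lemma F1[simp]: "fob F (unit_ob C) = unit_ob D"
proof -
  have "skeletal D" using sD unfolding special_2group_def by blast
  moreover have "iso D (f0 F)" using alliso by simp
  ultimately show ?thesis using f0_dom0 f0_cod0 unfolding skeletal_def
    by (metis f0_arr F_obj C_unit_obj unit_obj)
qed
lemma f0_dom[simp]: "mdom D (f0 F) = unit_ob D" by (rule f0_dom0)
lemma f0_cod[simp]: "mcod D (f0 F) = unit_ob D" using f0_cod0 by simp

lemma a_arr[simp]: "a \<in> arr D" and a_dom[simp]: "mdom D a = unit_ob D" and a_cod[simp]: "mcod D a = unit_ob D"
  and a_f0[simp]: "a \<cdot> f0 F = mid D (unit_ob D)" and f0_a[simp]: "f0 F \<cdot> a = mid D (unit_ob D)"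
  using ainv unfolding is_inverse_def by auto

definition th :: "'o \<Rightarrow> 'n" where "th x = a \<star> mid D (fob F x)"
definition Pi :: "'o \<Rightarrow> 'n" where "Pi x = f0 F \<star> mid D (fob F x)"

lemma th_arr[simp]: "x \<in> obj C \<Longrightarrow> th x \<in> arr D" unfolding th_def by simp
lemma th_dom[simp]: "x \<in> obj C \<Longrightarrow> mdom D (th x) = fob F x" unfolding th_def by simp
lemma th_cod[simp]: "x \<in> obj C \<Longrightarrow> mcod D (th x) = fob F x" unfolding th_def by simp
lemma Pi_arr[simp]: "x \<in> obj C \<Longrightarrow> Pi x \<in> arr D" unfolding Pi_def by simp
lemma Pi_dom[simp]: "x \<in> obj C \<Longrightarrow> mdom D (Pi x) = fob F x" unfolding Pi_def by simp
lemma Pi_cod[simp]: "x \<in> obj C \<Longrightarrow> mcod D (Pi x) = fob F x" unfolding Pi_def by simp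
lemma Pi_th[simp]: "x \<in> obj C \<Longrightarrow> Pi x \<cdot> th x = mid D (fob F x)"
  unfolding Pi_def th_def using interchange[of a "f0 F" "mid D (fob F x)" "mid D (fob F x)"] by simp
lemma th_Pi[simp]: "x \<in> obj C \<Longrightarrow> th x \<cdot> Pi x = mid D (fob F x)"
  unfolding Pi_def th_def using interchange[of "f0 F" a "mid D (fob F x)" "mid D (fob F x)"] by simp

lemma scal_nat: "h \<in> arr D \<Longrightarrow> h \<cdot> (a \<star> mid D (mdom D h)) = (a \<star> mid D (mcod D h)) \<cdot> h"
proof -
  assume h: "h \<in> arr D"
  have 1: "(mid D (unit_ob D) \<cdot> a) \<star> (h \<cdot> mid D (mdom D h)) = (mid D (unit_ob D) \<star> h) \<cdot> (a \<star> mid D (mdom D h))"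
    by (rule interchange) (simp_all add: h)
  have 2: "(a \<cdot> mid D (unit_ob D)) \<star> (mid D (mcod D h) \<cdot> h) = (a \<star> mid D (mcod D h)) \<cdot> (mid D (unit_ob D) \<star> h)"
    by (rule interchange) (simp_all add: h)
  show ?thesis using 1 2 h by simp
qed

lemma th_nat: "f \<in> arr C \<Longrightarrow> farr F f \<cdot> th (mdom C f) = th (mcod C f) \<cdot> farr F f"
  unfolding th_def using scal_nat[of "farr F f"] by simp


lemma th_nat_r: "f \<in> arr C \<Longrightarrow> r \<in> arr D \<Longrightarrow> mcod D r = fob F (mdom C f) \<Longrightarrow>
   farr F f \<cdot> (th (mdom C f) \<cdot> r) = th (mcod C f) \<cdot> (farr F f \<cdot> r)"
  by (simp add: comp_assoc[symmetric] th_nat)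

definition G2 :: "'o \<Rightarrow> 'o \<Rightarrow> 'n" where
  "G2 x y = th (tens C x y) \<cdot> (f2 F x y \<cdot> (Pi x \<star> Pi y))"

lemma G2_arr[simp]: "x \<in> obj C \<Longrightarrow> y \<in> obj C \<Longrightarrow> G2 x y \<in> arr D" unfolding G2_def by simp
lemma G2_dom[simp]: "x \<in> obj C \<Longrightarrow> y \<in> obj C \<Longrightarrow> mdom D (G2 x y) = tens D (fob F x) (fob F y)"
  unfolding G2_def by simp
lemma G2_cod[simp]: "x \<in> obj C \<Longrightarrow> y \<in> obj C \<Longrightarrow> mcod D (G2 x y) = fob F (tens C x y)"
  unfolding G2_def by simp

lemma K[simp]: "x \<in> obj C \<Longrightarrow> y \<in> obj C \<Longrightarrow> G2 x y \<cdot> (th x \<star> th y) = th (tens C x y) \<cdot> f2 F x y"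
proof -
  assume xy: "x \<in> obj C" "y \<in> obj C"
  have "(Pi x \<star> Pi y) \<cdot> (th x \<star> th y) = (Pi x \<cdot> th x) \<star> (Pi y \<cdot> th y)"
    by (rule interchange[symmetric]) (simp_all add: xy)
  hence e: "(Pi x \<star> Pi y) \<cdot> (th x \<star> th y) = mid D (tens D (fob F x) (fob F y))" using xy by simp
  show ?thesis unfolding G2_def using xy e by (simp add: comp_assoc)
qed

lemma K_r: "x \<in> obj C \<Longrightarrow> y \<in> obj C \<Longrightarrow> r \<in> arr D \<Longrightarrow> mcod D r = tens D (fob F x) (fob F y) \<Longrightarrow>
   G2 x y \<cdot> ((th x \<star> th y) \<cdot> r) = th (tens C x y) \<cdot> (f2 F x y \<cdot> r)"
  by (simp add: comp_assoc[symmetric])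

definition G :: "('o, 'm, 'p, 'n) mfun" where
  "G = \<lparr>fob = fob F, farr = farr F, f2 = G2, f0 = mid D (unit_ob D)\<rparr>"

lemma G_nat:
  assumes f: "f \<in> arr C" and g: "g \<in> arr C"
  shows "farr F (tensm C f g) \<cdot> G2 (mdom C f) (mdom C g) = G2 (mcod C f) (mcod C g) \<cdot> (farr F f \<star> farr F g)"
proof (rule cancel_r[of "th (mdom C f) \<star> th (mdom C g)"])
  show "(farr F (tensm C f g) \<cdot> G2 (mdom C f) (mdom C g)) \<cdot> (th (mdom C f) \<star> th (mdom C g)) =
    (G2 (mcod C f) (mcod C g) \<cdot> (farr F f \<star> farr F g)) \<cdot> (th (mdom C f) \<star> th (mdom C g))"
  proof -
    have 1: "(farr F f \<star> farr F g) \<cdot> (th (mdom C f) \<star> th (mdom C g)) =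
        (farr F f \<cdot> th (mdom C f)) \<star> (farr F g \<cdot> th (mdom C g))"
      by (rule interchange[symmetric]) (simp_all add: f g)
    have 2: "(th (mcod C f) \<cdot> farr F f) \<star> (th (mcod C g) \<cdot> farr F g) =
        (th (mcod C f) \<star> th (mcod C g)) \<cdot> (farr F f \<star> farr F g)"
      by (rule interchange) (simp_all add: f g)
    have 3: "farr F (tensm C f g) \<cdot> (th (tens C (mdom C f) (mdom C g)) \<cdot> f2 F (mdom C f) (mdom C g))
       = th (tens C (mcod C f) (mcod C g)) \<cdot> (farr F (tensm C f g) \<cdot> f2 F (mdom C f) (mdom C g))"
      using th_nat_r[of "tensm C f g" "f2 F (mdom C f) (mdom C g)"] f g by simp
    show ?thesis using f g 1 2 3 by (simp add: comp_assoc th_nat F2_nat K_r)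
  qed
qed (use f g alliso in simp_all)


lemma G_assoc:
  assumes x: "x \<in> obj C" and y: "y \<in> obj C" and z: "z \<in> obj C"
  shows "farr F (assoc C x y z) \<cdot> (G2 (tens C x y) z \<cdot> (G2 x y \<star> mid D (fob F z))) =
    G2 x (tens C y z) \<cdot> ((mid D (fob F x) \<star> G2 y z) \<cdot> assoc D (fob F x) (fob F y) (fob F z))"
proof (rule cancel_r[of "(th x \<star> th y) \<star> th z"])
  have L1: "(G2 x y \<star> mid D (fob F z)) \<cdot> ((th x \<star> th y) \<star> th z) =
      (th (tens C x y) \<star> th z) \<cdot> (f2 F x y \<star> mid D (fob F z))"
  proof -
    have "(G2 x y \<star> mid D (fob F z)) \<cdot> ((th x \<star> th y) \<star> th z) =
        (G2 x y \<cdot> (th x \<star> th y)) \<star> (mid D (fob F z) \<cdot> th z)"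
      by (rule interchange[symmetric]) (simp_all add: x y z)
    also have "\<dots> = (th (tens C x y) \<cdot> f2 F x y) \<star> (th z \<cdot> mid D (fob F z))"
      using x y z by simp
    also have "\<dots> = (th (tens C x y) \<star> th z) \<cdot> (f2 F x y \<star> mid D (fob F z))"
      by (rule interchange) (simp_all add: x y z)
    finally show ?thesis .
  qed
  have R0: "assoc D (fob F x) (fob F y) (fob F z) \<cdot> ((th x \<star> th y) \<star> th z) =
      (th x \<star> (th y \<star> th z)) \<cdot> assoc D (fob F x) (fob F y) (fob F z)"
    using assoc_nat[of "th x" "th y" "th z"] x y z by simp
  have R1: "(mid D (fob F x) \<star> G2 y z) \<cdot> (th x \<star> (th y \<star> th z)) =
      (th x \<star> th (tens C y z)) \<cdot> (mid D (fob F x) \<star> f2 F y z)"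
  proof -
    have "(mid D (fob F x) \<star> G2 y z) \<cdot> (th x \<star> (th y \<star> th z)) =
        (mid D (fob F x) \<cdot> th x) \<star> (G2 y z \<cdot> (th y \<star> th z))"
      by (rule interchange[symmetric]) (simp_all add: x y z)
    also have "\<dots> = (th x \<cdot> mid D (fob F x)) \<star> (th (tens C y z) \<cdot> f2 F y z)"
      using x y z by simp
    also have "\<dots> = (th x \<star> th (tens C y z)) \<cdot> (mid D (fob F x) \<star> f2 F y z)"
      by (rule interchange) (simp_all add: x y z)
    finally show ?thesis .
  qed
  have R1r: "(mid D (fob F x) \<star> G2 y z) \<cdot> ((th x \<star> (th y \<star> th z)) \<cdot> r) =
      (th x \<star> th (tens C y z)) \<cdot> ((mid D (fob F x) \<star> f2 F y z) \<cdot> r)"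
    if "r \<in> arr D" "mcod D r = tens D (fob F x) (tens D (fob F y) (fob F z))" for r
    using that x y z R1 by (simp add: comp_assoc[symmetric])
  have A: "farr F (assoc C x y z) \<cdot> (th (tens C (tens C x y) z) \<cdot> r) =
      th (tens C x (tens C y z)) \<cdot> (farr F (assoc C x y z) \<cdot> r)"
    if "r \<in> arr D" "mcod D r = fob F (tens C (tens C x y) z)" for r
    using th_nat_r[of "assoc C x y z" r] that x y z by simp
  show "(farr F (assoc C x y z) \<cdot> (G2 (tens C x y) z \<cdot> (G2 x y \<star> mid D (fob F z)))) \<cdot> ((th x \<star> th y) \<star> th z) =
    (G2 x (tens C y z) \<cdot> ((mid D (fob F x) \<star> G2 y z) \<cdot> assoc D (fob F x) (fob F y) (fob F z))) \<cdot> ((th x \<star> th y) \<star> th z)"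
    using x y z L1 R0 by (simp add: comp_assoc K_r A R1r F_assoc)
qed (use x y z alliso in simp_all)

lemma G_lunit: "x \<in> obj C \<Longrightarrow> G2 (unit_ob C) x = mid D (fob F x)"
proof -
  assume x: "x \<in> obj C"
  have e: "f2 F (unit_ob C) x \<cdot> Pi x = mid D (fob F x)"
    using F_lunit[OF x] x luC[OF x] lu unfolding Pi_def by simp
  have p1: "Pi (unit_ob C) = f0 F" unfolding Pi_def by simp
  have "(f0 F \<cdot> mid D (unit_ob D)) \<star> (mid D (fob F x) \<cdot> Pi x) = (f0 F \<star> mid D (fob F x)) \<cdot> (mid D (unit_ob D) \<star> Pi x)"
    by (rule interchange) (simp_all add: x)
  hence p2: "f0 F \<star> Pi x = Pi x \<cdot> Pi x" using x unfolding Pi_def by simp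
  have "G2 (unit_ob C) x = th x \<cdot> ((f2 F (unit_ob C) x \<cdot> Pi x) \<cdot> Pi x)"
    unfolding G2_def p1 p2 using x by (simp add: comp_assoc)
  also have "\<dots> = mid D (fob F x)" using e x by simp
  finally show ?thesis .
qed

lemma G_runit: "x \<in> obj C \<Longrightarrow> G2 x (unit_ob C) = mid D (fob F x)"
proof -
  assume x: "x \<in> obj C"
  have e: "f2 F x (unit_ob C) \<cdot> (mid D (fob F x) \<star> f0 F) = mid D (fob F x)"
    using F_runit[OF x] x ruC[OF x] ru by simp
  have p1: "Pi (unit_ob C) = f0 F" unfolding Pi_def by simp
  have "(mid D (fob F x) \<cdot> Pi x) \<star> (f0 F \<cdot> mid D (unit_ob D)) = (mid D (fob F x) \<star> f0 F) \<cdot> (Pi x \<star> mid D (unit_ob D))"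
    by (rule interchange) (simp_all add: x)
  hence p2: "Pi x \<star> f0 F = (mid D (fob F x) \<star> f0 F) \<cdot> Pi x" using x by simp
  have "G2 x (unit_ob C) = th x \<cdot> ((f2 F x (unit_ob C) \<cdot> (mid D (fob F x) \<star> f0 F)) \<cdot> Pi x)"
    unfolding G2_def p1 p2 using x by (simp add: comp_assoc)
  also have "\<dots> = mid D (fob F x)" using e x by simp
  finally show ?thesis .
qed

lemma G_wmf: "weak_monoidal_functor C D G"
proof -
  have "is_functor C D G" using isF unfolding is_functor_def G_def by simp
  moreover have "iso D (mid D (unit_ob D))" by (simp add: alliso)
  ultimately show ?thesis
    unfolding weak_monoidal_functor_def G_def
    using G_nat G_assoc G_lunit G_runit luC ruC lu ru alliso by simp
qed

lemma main: "special_hom C D G \<and> isomorphic_homs C D F G"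
proof
  show "special_hom C D G" unfolding special_hom_def c2g_hom_def
    using sC sD G_wmf unfolding special_2group_def by (simp add: G_def)
  have "monoidal_nat_iso C D F G th"
    unfolding monoidal_nat_iso_def monoidal_nat_trans_def
    using th_nat alliso by (simp add: G_def th_def[of "unit_ob C"])
  thus "isomorphic_homs C D F G" unfolding isomorphic_homs_def by blast
qed

end

theorem proposition8p10:
  fixes C :: "('o, 'm) c2g" and D :: "('p, 'n) c2g" and F :: "('o, 'm, 'p, 'n) mfun"
  assumes "special_2group C" and "special_2group D" and "c2g_hom C D F"
  shows "\<exists>G :: ('o, 'm, 'p, 'n) mfun. special_hom C D G \<and> isomorphic_homs C D F G"
proof -
  have "iso D (f0 F)" using assms(3) unfolding c2g_hom_def weak_monoidal_functor_def by blast
  then obtain a where a: "is_inverse D (f0 F) a" unfolding iso_def by blast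
  have mD: "monoidal_category D" using assms(2) unfolding special_2group_def coherent_2group_def by blast
  interpret S: SETUP D C F a
    unfolding SETUP_def SETUP_axioms_def SMC_def SMC_axioms_def MC_def
    using assms a mD unfolding special_2group_def by blast
  show ?thesis using S.main by blast
qed

end
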